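(* Let $P$ be a finite geometric lattice of rank $n$ with a fixed atom ordering, $S=\{s_1<\dots<s_k\}\subseteq\{1,\dots,n-1\}$, and let $F$ be a standard filling of $\mathrm{Rib}(s_1,s_2-s_1,\dots,n-s_k)$ whose reading word is an $\mathrm{NBC}^+$ basis of $P$. Then the summands $\mathrm{sgn}(\sigma)\,\bar f_{chain}(\{\sigma F\})$, $\sigma\in\mathrm{Col}_F$, appearing in $\bar f_{chain}(v_F)$ are distinct maximal chains of $P^S$; that is, $\bar f_{chain}(\{\sigma F\})\ne\bar f_{chain}(\{\sigma' F\})$ for distinct $\sigma,\sigma'\in\mathrm{Col}_F$.
   Context: $A(x)$ is the set of atoms below $x$. NBC independent set: atoms $\{b_1,\dots,b_l\}$ whose join has rank $l$ and such that every atom outside the set below the join is later in the order than some $b_j$. $\mathrm{NBC}^+$ basis: ordered NBC independent set $(b_1,\dots,b_n)$, $n=\mathrm{rk}(P)$, with $b_j=\min(A(b_1\vee\dots\vee b_j)\setminus A(b_1\vee\dots\vee b_{j-1}))$. $\mathrm{Rib}(r_1,\dots,r_p)$: ribbon with rows of lengths $r_1,\dots,r_p$ bottom to top, each row starting directly above the last box of the row below; reading word: left to right, bottom row to top; standard: entries increase in atom order along rows left to right and down columns top to bottom. $\mathrm{Col}_F$: permutations of the entries preserving each column. Tabloid $\{F\}$: $F$ modulo permuting entries within rows; $v_F=\sum_{\sigma\in\mathrm{Col}_F}\mathrm{sgn}(\sigma)\{\sigma F\}$. $P^S$: elements with rank in $S$. For reading word $(F_1,\dots,F_n)$, $\bar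 f_{chain}(\{F\})$ is the chain $F_1\vee\dots\vee F_{s_1}<\dots<F_1\vee\dots\vee F_{s_k}$ in $P^S$, extended linearly. *)

theory Defs
  imports Main "HOL-Combinatorics.Permutations"
begin

(* P is modelled as a finite type with a (necessarily complete) lattice structure. *)

definition covers :: "'a::order \<Rightarrow> 'a \<Rightarrow> bool" where
  "covers x y \<longleftrightarrow> x < y \<and> \<not> (\<exists>z. x < z \<and> z < y)"

definition is_atom :: "'a::complete_lattice \<Rightarrow> bool" where
  "is_atom a \<longleftrightarrow> covers bot a"

definition atoms_below :: "'a::complete_lattice \<Rightarrow> 'a set" where
  "atoms_below x = {a. is_atom a \<and> a \<le> x}"

definition rk :: "'a::{finite,complete_lattice} \<Rightarrow> nat" where
  "rk x = Max (length ` {xs. sorted_wrt (<) xs \<and> (\<forall>y\<in>set xs. y < x)})"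

definition geometric_lattice :: "'a::{finite,complete_lattice} itself \<Rightarrow> bool" where
  "geometric_lattice _ \<longleftrightarrow>
     (\<forall>x::'a. x = Sup (atoms_below x)) \<and>
     (\<forall>x y::'a. covers (inf x y) x \<and> covers (inf x y) y \<longrightarrow>
                 covers x (sup x y) \<and> covers y (sup x y))"

(* atom ordering given by an injective labelling ord of the atoms: a before b iff ord a < ord b *)
definition atom_ordering :: "('a::complete_lattice \<Rightarrow> nat) \<Rightarrow> bool" where
  "atom_ordering ord \<longleftrightarrow> inj_on ord {a. is_atom a}"

definition is_min_in :: "('a \<Rightarrow> nat) \<Rightarrow> 'a \<Rightarrow> 'a set \<Rightarrow> bool" where
  "is_min_in ord b X \<longleftrightarrow> b \<in> X \<and> (\<forall>a\<in>X. ord b \<le> ord a)"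

definition NBC_independent :: "('a::{finite,complete_lattice} \<Rightarrow> nat) \<Rightarrow> 'a set \<Rightarrow> bool" where
  "NBC_independent ord B \<longleftrightarrow>
     B \<subseteq> {a. is_atom a} \<and> rk (Sup B) = card B \<and>
     (\<forall>a\<in>atoms_below (Sup B) - B. \<exists>b\<in>B. ord b < ord a)"

definition NBC_plus_basis :: "('a::{finite,complete_lattice} \<Rightarrow> nat) \<Rightarrow> 'a list \<Rightarrow> bool" where
  "NBC_plus_basis ord bs \<longleftrightarrow>
     distinct bs \<and> length bs = rk (top::'a) \<and> NBC_independent ord (set bs) \<and>
     (\<forall>j<length bs. is_min_in ord (bs ! j)
        (atoms_below (Sup (set (take (Suc j) bs))) - atoms_below (Sup (set (take j bs)))))"

(* Ribbon Rib(s_1, s_2-s_1, ..., n-s_k) with S = set ss, described through the reading word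
   w (0-based: w!i is the entry in reading position i+1).  Reading positions p and p+1
   (1-based) are in the same column (p+1 directly above p) iff p \<in> S; otherwise they are
   consecutive in a row. *)
definition standard_ribbon_filling ::
    "('a \<Rightarrow> nat) \<Rightarrow> nat list \<Rightarrow> nat \<Rightarrow> 'a list \<Rightarrow> bool" where
  "standard_ribbon_filling ord ss n w \<longleftrightarrow>
     length w = n \<and>
     (\<forall>i. Suc i < n \<longrightarrow>
        (if Suc i \<in> set ss then ord (w ! Suc i) < ord (w ! i)
         else ord (w ! i) < ord (w ! Suc i)))"

definition same_column :: "nat list \<Rightarrow> nat \<Rightarrow> nat \<Rightarrow> bool" where
  "same_column ss i j \<longleftrightarrow> (\<forall>t. min i j < t \<and> t \<le> max i j \<longrightarrow> t \<in> set ss)"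

(* Col_F, as permutations of the positions preserving every column *)
definition col_perms :: "nat list \<Rightarrow> nat \<Rightarrow> (nat \<Rightarrow> nat) set" where
  "col_perms ss n = {\<pi>. \<pi> permutes {..<n} \<and> (\<forall>i<n. same_column ss i (\<pi> i))}"

definition perm_word :: "(nat \<Rightarrow> nat) \<Rightarrow> 'a list \<Rightarrow> 'a list" where
  "perm_word \<pi> w = map (\<lambda>i. w ! \<pi> i) [0..<length w]"

definition f_chain :: "nat list \<Rightarrow> 'a::complete_lattice list \<Rightarrow> 'a list" where
  "f_chain ss w = map (\<lambda>s. Sup (set (take s w))) ss"

definition maximal_chain_PS :: "nat list \<Rightarrow> 'a::{finite,complete_lattice} list \<Rightarrow> bool" where
  "maximal_chain_PS ss c \<longleftrightarrow>
     length c = length ss \<and> (\<forall>i<length c. rk (c ! i) = ss ! i) \<and> sorted_wrt (<) c"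

end

theory Submission
  imports Defs
begin


inductive satc :: "'a::order \<Rightarrow> 'a list \<Rightarrow> 'a \<Rightarrow> bool" where
  sat_nil: "satc p [] p"
| sat_cons: "covers p q \<Longrightarrow> satc q cs x \<Longrightarrow> satc p (q#cs) x"

lemma satc_le: "satc p cs x \<Longrightarrow> p \<le> x"
  by (induction rule: satc.induct) (auto simp: covers_def)

lemma satc_append: "satc p cs y \<Longrightarrow> satc y ds x \<Longrightarrow> satc p (cs@ds) x"
  by (induction rule: satc.induct) (auto intro: satc.intros)

lemma satc_single: "covers p q \<Longrightarrow> satc p [q] q"
  by (auto intro: satc.intros)

lemma satc_NilD: "satc p [] x \<Longrightarrow> p = x"
  by (erule satc.cases) auto

lemma card_less_mono:
  fixes p q :: "'a::{finite,order}"
  assumes "p < q" shows "card {y. q < y} < card {y. p < y}"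
  by (rule psubset_card_mono) (use assms in \<open>auto intro: less_trans\<close>)

lemma card_less_mono2:
  fixes p q :: "'a::{finite,order}"
  assumes "p < q" shows "card {y. y < p} < card {y. y < q}"
  by (rule psubset_card_mono) (use assms in \<open>auto intro: less_trans\<close>)

lemma upper_cover_exists:
  fixes p x :: "'a::{finite,order}"
  assumes "p < x" shows "\<exists>q. covers p q \<and> q \<le> x"
proof -
  obtain q where q: "q \<in> {q. p < q \<and> q \<le> x}" "\<forall>b\<in>{q. p < q \<and> q \<le> x}. b \<le> q \<longrightarrow> q = b"
    using finite_has_minimal[of "{q. p < q \<and> q \<le> x}"] assms by auto
  have "covers p q" unfolding covers_def
  proof (intro conjI notI)
    show "p < q" using q by auto
  next
    assume "\<exists>z. p < z \<and> z < q"
    then obtain z where "p < z" "z < q" by auto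
    then show False using q by fastforce
  qed
  then show ?thesis using q by auto
qed

lemma lower_cover_exists:
  fixes p x :: "'a::{finite,order}"
  assumes "p < x" shows "\<exists>u. covers u x \<and> p \<le> u"
proof -
  obtain q where q: "q \<in> {q. p \<le> q \<and> q < x}" "\<forall>b\<in>{q. p \<le> q \<and> q < x}. q \<le> b \<longrightarrow> q = b"
    using finite_has_maximal[of "{q. p \<le> q \<and> q < x}"] assms by auto
  have "covers q x" unfolding covers_def
  proof (intro conjI notI)
    show "q < x" using q by auto
  next
    assume "\<exists>z. q < z \<and> z < x"
    then obtain z where "q < z" "z < x" by auto
    then have "z \<in> {q. p \<le> q \<and> q < x}" "q \<le> z" using q by auto
    then show False using q \<open>q < z\<close> by blast
  qed
  then show ?thesis using q by auto
qed

lemma satc_exists: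
  fixes p x :: "'a::{finite,order}"
  shows "p \<le> x \<Longrightarrow> \<exists>cs. satc p cs x"
proof (induction p rule: measure_induct_rule[where f = "\<lambda>p. card {y::'a. p < y}"])
  case (less p)
  show ?case
  proof (cases "p = x")
    case True then show ?thesis by (auto intro: satc.intros)
  next
    case False
    then have "p < x" using less.prems by auto
    then obtain q where q: "covers p q" "q \<le> x" using upper_cover_exists by blast
    then have "p < q" by (auto simp: covers_def)
    then obtain cs where "satc q cs x" using less.IH[of q] q card_less_mono by blast
    then show ?thesis using q by (auto intro: satc.intros)
  qed
qed

lemma birk:
  fixes x y :: "'a::{finite,complete_lattice}"
  assumes "geometric_lattice TYPE('a)" "covers (inf x y) x" "covers (inf x y) y"
  shows "covers x (sup x y)" "covers y (sup x y)"
  using assms unfolding geometric_lattice_def by blast+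

lemma JD:
  fixes p :: "'a::{finite,complete_lattice}"
  assumes geo: "geometric_lattice TYPE('a)"
  shows "satc p cs x \<Longrightarrow> satc p ds x \<Longrightarrow> length cs = length ds"
proof (induction p arbitrary: cs ds rule: measure_induct_rule[where f = "\<lambda>p. card {y::'a. p < y}"])
  case (less p)
  show ?case
  proof (cases cs)
    case Nil
    then have "p = x" using less.prems satc_NilD by blast
    show ?thesis
    proof (cases ds)
      case (Cons q ds')
      then have "covers p q" "satc q ds' x" using less.prems(2) by (auto elim: satc.cases)
      then show ?thesis using satc_le[of q ds' x] \<open>p = x\<close> by (auto simp: covers_def)
    qed (simp add: Nil)
  next
    case (Cons q1 cs')
    then have c1: "covers p q1" "satc q1 cs' x" using less.prems(1) by (auto elim: satc.cases)
    show ?thesis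
    proof (cases ds)
      case Nil
      then have "p = x" using less.prems satc_NilD by blast
      then show ?thesis using satc_le[of q1 cs' x] c1 by (auto simp: covers_def)
    next
      case (Cons q2 ds')
      then have c2: "covers p q2" "satc q2 ds' x" using less.prems(2) by (auto elim: satc.cases)
      have lt1: "p < q1" and lt2: "p < q2" using c1 c2 by (auto simp: covers_def)
      show ?thesis
      proof (cases "q1 = q2")
        case True
        then show ?thesis using less.IH[OF card_less_mono[OF lt1] c1(2)] c2 Cons \<open>cs = q1 # cs'\<close> by auto
      next
        case False
        define m where "m = inf q1 q2"
        have pm: "p \<le> m" using lt1 lt2 unfolding m_def by auto
        have "m \<noteq> q1"
        proof
          assume "m = q1"
          then have "q1 < q2" using False unfolding m_def by (metis inf.absorb_iff1 order.not_eq_order_implies_strict)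
          then show False using c2 lt1 by (auto simp: covers_def)
        qed
        then have "m < q1" unfolding m_def using inf.cobounded1[of q1 q2] by (simp add: less_le)
        then have "m = p" using pm c1 by (auto simp: covers_def le_less)
        moreover have "m \<noteq> q2"
        proof
          assume "m = q2"
          then have "q2 < q1" using False unfolding m_def by (metis inf.absorb_iff2 order.not_eq_order_implies_strict)
          then show False using c1 lt2 by (auto simp: covers_def)
        qed
        ultimately have "covers (inf q1 q2) q1" "covers (inf q1 q2) q2" using c1 c2 m_def by auto
        then have z1: "covers q1 (sup q1 q2)" and z2: "covers q2 (sup q1 q2)" using birk[OF geo] by blast+
        have "sup q1 q2 \<le> x" using satc_le[OF c1(2)] satc_le[OF c2(2)] by simp
        then obtain es where es: "satc (sup q1 q2) es x" using satc_exists by blast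
        have "length cs' = length (sup q1 q2 # es)"
          using less.IH[OF card_less_mono[OF lt1] c1(2) sat_cons[OF z1 es]] .
        moreover have "length ds' = length (sup q1 q2 # es)"
          using less.IH[OF card_less_mono[OF lt2] c2(2) sat_cons[OF z2 es]] .
        ultimately show ?thesis using Cons \<open>cs = q1 # cs'\<close> by simp
      qed
    qed
  qed
qed

lemma sorted_less_distinct: "sorted_wrt (<) (xs::'a::order list) \<Longrightarrow> distinct xs"
  by (induction xs) auto

lemma rk_set_finite:
  "finite {xs::'a::{finite,order} list. sorted_wrt (<) xs \<and> (\<forall>y\<in>set xs. y < x)}"
proof (rule finite_subset)
  show "{xs::'a list. sorted_wrt (<) xs \<and> (\<forall>y\<in>set xs. y < x)}
        \<subseteq> {xs. set xs \<subseteq> UNIV \<and> length xs \<le> card (UNIV::'a set)}"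
  proof
    fix xs :: "'a list" assume xs: "xs \<in> {xs::'a list. sorted_wrt (<) xs \<and> (\<forall>y\<in>set xs. y < x)}"
    then have "distinct xs" using sorted_less_distinct by blast
    then have "length xs \<le> card (UNIV::'a set)"
      using card_mono[of UNIV "set xs"] by (simp add: distinct_card)
    then show "xs \<in> {xs. set xs \<subseteq> UNIV \<and> length xs \<le> card (UNIV::'a set)}" by simp
  qed
next
  show "finite {xs. set xs \<subseteq> (UNIV::'a set) \<and> length xs \<le> card (UNIV::'a set)}"
    by (rule finite_lists_length_le) simp
qed

lemma satc_list:
  "satc p cs x \<Longrightarrow> cs \<noteq> [] \<Longrightarrow> sorted_wrt (<) (p # butlast cs) \<and> (\<forall>y\<in>set (p # butlast cs). y < x)"
proof (induction rule: satc.induct)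
  case (sat_nil p) then show ?case by simp
next
  case (sat_cons p q cs x)
  show ?case
  proof (cases "cs = []")
    case True
    then have "q = x" using sat_cons satc_NilD by blast
    then show ?thesis using sat_cons True by (simp add: covers_def)
  next
    case False
    then have ih: "sorted_wrt (<) (q # butlast cs)" "\<forall>y\<in>set (q # butlast cs). y < x"
      using sat_cons.IH by auto
    have pq: "p < q" using sat_cons by (simp add: covers_def)
    have "butlast (q # cs) = q # butlast cs" using False by simp
    then show ?thesis using ih pq by (auto intro: less_trans)
  qed
qed

lemma rk_ge:
  fixes x :: "'a::{finite,complete_lattice}"
  assumes "satc bot cs x" shows "length cs \<le> rk x"
proof (cases "cs = []")
  case True then show ?thesis by simp
next
  case False
  have "bot # butlast cs \<in> {xs. sorted_wrt (<) xs \<and> (\<forall>y\<in>set xs. y < x)}"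
    using satc_list[OF assms False] by simp
  then have "length (bot # butlast cs) \<le> rk x" unfolding rk_def
  proof (intro Max_ge)
    show "finite (length ` {xs::'a list. sorted_wrt (<) xs \<and> (\<forall>y\<in>set xs. y < x)})"
      using rk_set_finite[of x] by simp
  qed (rule imageI)
  then show ?thesis using False by simp
qed

lemma rk_le_aux:
  fixes ys :: "'a::{finite,complete_lattice} list"
  assumes geo: "geometric_lattice TYPE('a)"
  shows "sorted_wrt (<) ys \<Longrightarrow> (\<forall>y\<in>set ys. y < x) \<Longrightarrow> satc bot cs x \<Longrightarrow> length ys \<le> length cs"
proof (induction ys arbitrary: x cs rule: rev_induct)
  case Nil then show ?case by simp
next
  case (snoc y zs)
  have yx: "y < x" using snoc.prems by simp
  obtain ds where ds: "satc bot ds y" using satc_exists[of bot y] by auto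
  have "length zs \<le> length ds"
    using snoc.IH[OF _ _ ds] snoc.prems by (auto simp: sorted_wrt_append)
  obtain es where es: "satc y es x" using satc_exists[of y x] yx less_imp_le by blast
  have "es \<noteq> []" using es yx satc_NilD by blast
  have "length cs = length (ds @ es)" using JD[OF geo snoc.prems(3) satc_append[OF ds es]] .
  then show ?case using \<open>length zs \<le> length ds\<close> \<open>es \<noteq> []\<close> by (cases es) auto
qed

lemma rk_satc:
  fixes x :: "'a::{finite,complete_lattice}"
  assumes geo: "geometric_lattice TYPE('a)" and "satc bot cs x"
  shows "rk x = length cs"
proof -
  have "rk x \<le> length cs" unfolding rk_def
  proof (subst Max_le_iff)
    show "finite (length ` {xs::'a list. sorted_wrt (<) xs \<and> (\<forall>y\<in>set xs. y < x)})"
      using rk_set_finite[of x] by simp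
    have "([]::'a list) \<in> {xs::'a list. sorted_wrt (<) xs \<and> (\<forall>y\<in>set xs. y < x)}" by simp
    then show "length ` {xs::'a list. sorted_wrt (<) xs \<and> (\<forall>y\<in>set xs. y < x)} \<noteq> {}" by blast
    show "\<forall>a\<in>length ` {xs::'a list. sorted_wrt (<) xs \<and> (\<forall>y\<in>set xs. y < x)}. a \<le> length cs"
      using rk_le_aux[OF geo _ _ assms(2)] by blast
  qed
  then show ?thesis using rk_ge[OF assms(2)] by simp
qed

lemma rk_bot: "geometric_lattice TYPE('a::{finite,complete_lattice}) \<Longrightarrow> rk (bot::'a) = 0"
  using rk_satc[OF _ sat_nil] by simp

lemma rk_cover:
  fixes x y :: "'a::{finite,complete_lattice}"
  assumes geo: "geometric_lattice TYPE('a)" and "covers x y"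
  shows "rk y = Suc (rk x)"
proof -
  obtain cs where cs: "satc bot cs x" using satc_exists[of bot x] by auto
  have "satc bot (cs @ [y]) y" using satc_append[OF cs satc_single[OF assms(2)]] .
  then show ?thesis using rk_satc[OF geo cs] rk_satc[OF geo] by simp
qed

lemma cover_atom:
  fixes x a :: "'a::{finite,complete_lattice}"
  assumes geo: "geometric_lattice TYPE('a)" and at: "is_atom a"
  shows "\<not> a \<le> x \<Longrightarrow> covers x (sup x a)"
proof (induction x rule: measure_induct_rule[where f = "\<lambda>x. card {y::'a. y < x}"])
  case (less x)
  show ?case
  proof (cases "x = bot")
    case True then show ?thesis using at by (simp add: is_atom_def)
  next
    case False
    then have "bot < x" by (simp add: bot.not_eq_extremum)
    then obtain x' where x': "covers x' x" using lower_cover_exists by blast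
    then have "x' < x" by (simp add: covers_def)
    then have na: "\<not> a \<le> x'" using less.prems by auto
    have c1: "covers x' (sup x' a)" using less.IH[OF card_less_mono2[OF \<open>x' < x\<close>] na] .
    define m where "m = inf x (sup x' a)"
    have "x' \<le> m" unfolding m_def using \<open>x' < x\<close> by simp
    have "m \<noteq> x"
    proof
      assume "m = x"
      then have "x \<le> sup x' a" unfolding m_def by (simp add: le_iff_inf)
      moreover have "\<not> x < sup x' a" using c1 \<open>x' < x\<close> unfolding covers_def by blast
      ultimately have "x = sup x' a" by (simp add: le_less)
      then show False using less.prems by simp
    qed
    then have "m < x" unfolding m_def using inf.cobounded1[of x "sup x' a"] by (simp add: less_le)
    then have "m = x'" using \<open>x' \<le> m\<close> x' unfolding covers_def by (metis le_less)
    then have "covers (inf x (sup x' a)) x" "covers (inf x (sup x' a)) (sup x' a)"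
      using x' c1 m_def by auto
    then have "covers x (sup x (sup x' a))" using birk[OF geo] by blast
    moreover have "sup x (sup x' a) = sup x a" using \<open>x' < x\<close>
      by (simp add: sup.absorb1 sup_assoc[symmetric])
    ultimately show ?thesis by simp
  qed
qed

lemma rk_sup_atom:
  fixes x a :: "'a::{finite,complete_lattice}"
  assumes geo: "geometric_lattice TYPE('a)" and at: "is_atom a"
  shows "rk (sup x a) \<le> Suc (rk x)"
proof (cases "a \<le> x")
  case True then show ?thesis by (simp add: sup.absorb1)
next
  case False then show ?thesis using rk_cover[OF geo cover_atom[OF geo at False]] by simp
qed

lemma rk_sup_atoms:
  fixes x :: "'a::{finite,complete_lattice}"
  assumes geo: "geometric_lattice TYPE('a)"
  shows "finite T \<Longrightarrow> (\<forall>a\<in>T. is_atom a) \<Longrightarrow> rk (sup x (Sup T)) \<le> rk x + card T"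
proof (induction T rule: finite_induct)
  case empty then show ?case by simp
next
  case (insert a T)
  have "sup x (Sup (insert a T)) = sup (sup x (Sup T)) a"
    by (simp add: Sup_insert sup_assoc sup_commute sup_left_commute)
  then have "rk (sup x (Sup (insert a T))) = rk (sup (sup x (Sup T)) a)" by simp
  also have "\<dots> \<le> Suc (rk (sup x (Sup T)))" using rk_sup_atom[OF geo] insert.prems by simp
  also have "\<dots> \<le> rk x + card (insert a T)" using insert by simp
  finally show ?case .
qed

lemma indep_rk:
  fixes B :: "'a::{finite,complete_lattice} set"
  assumes geo: "geometric_lattice TYPE('a)" and at: "\<forall>a\<in>B. is_atom a"
    and rB: "rk (Sup B) = card B" and T: "T \<subseteq> B"
  shows "rk (Sup T) = card T"
proof -
  have fT: "finite T" "finite B" by auto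
  have le: "rk (Sup T) \<le> card T"
    using rk_sup_atoms[OF geo fT(1), of bot] at T rk_bot[OF geo] by auto
  have "B = T \<union> (B - T)" using T by blast
  then have "Sup B = sup (Sup T) (Sup (B - T))" by (metis Sup_union_distrib)
  then have "rk (Sup B) \<le> rk (Sup T) + card (B - T)"
    using rk_sup_atoms[OF geo _, of "B - T" "Sup T"] at by auto
  moreover have "card (B - T) = card B - card T" using T fT by (simp add: card_Diff_subset)
  moreover have "card T \<le> card B" using T fT by (simp add: card_mono)
  ultimately show ?thesis using le rB by linarith
qed

lemma indep_notle:
  fixes B :: "'a::{finite,complete_lattice} set"
  assumes geo: "geometric_lattice TYPE('a)" and at: "\<forall>a\<in>B. is_atom a"
    and rB: "rk (Sup B) = card B" and T: "T \<subseteq> B" and a: "a \<in> B - T"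
  shows "\<not> a \<le> Sup T"
proof
  assume "a \<le> Sup T"
  then have "Sup (insert a T) = Sup T" by (simp add: sup.absorb2)
  moreover have "rk (Sup (insert a T)) = card (insert a T)"
    using indep_rk[OF geo at rB, of "insert a T"] a T by (simp add: finite_subset[OF T])
  moreover have "rk (Sup T) = card T" using indep_rk[OF geo at rB T] .
  moreover have "card (insert a T) = Suc (card T)" using a by simp
  ultimately show False by simp
qed

lemma indep_inj:
  fixes B :: "'a::{finite,complete_lattice} set"
  assumes geo: "geometric_lattice TYPE('a)" and at: "\<forall>a\<in>B. is_atom a"
    and rB: "rk (Sup B) = card B" and T: "T \<subseteq> B" "U \<subseteq> B" and eq: "Sup T = Sup U"
  shows "T = U"
proof -
  have "T \<subseteq> U"
  proof
    fix a assume "a \<in> T"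
    then have "a \<le> Sup U" using eq Sup_upper[of a T] by simp
    then show "a \<in> U" using indep_notle[OF geo at rB T(2), of a] \<open>a \<in> T\<close> T by blast
  qed
  moreover have "U \<subseteq> T"
  proof
    fix a assume "a \<in> U"
    then have "a \<le> Sup T" using eq Sup_upper[of a U] by simp
    then show "a \<in> T" using indep_notle[OF geo at rB T(1), of a] \<open>a \<in> U\<close> T by blast
  qed
  ultimately show ?thesis by blast
qed



lemma perm_word_take:
  assumes "s \<le> length w"
  shows "set (take s (perm_word \<pi> w)) = (\<lambda>i. w ! \<pi> i) ` {..<s}"
proof -
  have "take s (perm_word \<pi> w) = map (\<lambda>i. w ! \<pi> i) [0..<s]"
    using assms unfolding perm_word_def by (simp add: take_map)
  then show ?thesis by (simp add: atLeast0LessThan)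
qed

lemma colperm_take:
  assumes pi: "\<pi> \<in> col_perms ss n" and d: "distinct w" and l: "length w = n" and s: "s \<le> n"
  shows "set (take s (perm_word \<pi> w)) \<subseteq> set w" "card (set (take s (perm_word \<pi> w))) = s"
proof -
  have perm: "\<pi> permutes {..<n}" using pi by (simp add: col_perms_def)
  have lt: "\<pi> i < n" if "i < n" for i using permutes_in_image[OF perm, of i] that by simp
  show "set (take s (perm_word \<pi> w)) \<subseteq> set w"
    using perm_word_take[of s w \<pi>] s l lt by auto
  have "inj_on (\<lambda>i. w ! \<pi> i) {..<s}"
  proof
    fix i j assume "i \<in> {..<s}" "j \<in> {..<s}" "w ! \<pi> i = w ! \<pi> j"
    moreover have "\<pi> i < length w" "\<pi> j < length w" using \<open>i \<in> {..<s}\<close> \<open>j \<in> {..<s}\<close> lt s l by auto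
    ultimately have "\<pi> i = \<pi> j" using nth_eq_iff_index_eq[OF d] by blast
    then show "i = j" using permutes_inj[OF perm] by (simp add: inj_eq)
  qed
  then show "card (set (take s (perm_word \<pi> w))) = s"
    using perm_word_take[of s w \<pi>] s l by (simp add: card_image)
qed

lemma colperm_take_fixed:
  assumes pi: "\<pi> \<in> col_perms ss n" and d: "distinct w" and l: "length w = n" and s: "s \<le> n"
    and ns: "s \<notin> set ss"
  shows "set (take s (perm_word \<pi> w)) = set (take s w)"
proof -
  have perm: "\<pi> permutes {..<n}" and col: "\<forall>i<n. same_column ss i (\<pi> i)"
    using pi by (auto simp: col_perms_def)
  have "\<pi> i < s" if "i < s" for i
  proof (rule ccontr)
    assume "\<not> \<pi> i < s"
    then have "min i (\<pi> i) < s \<and> s \<le> max i (\<pi> i)" using that by auto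
    moreover have "same_column ss i (\<pi> i)" using col that s by simp
    ultimately have "s \<in> set ss" unfolding same_column_def by blast
    then show False using ns by simp
  qed
  note hpi = this
  have sub: "set (take s (perm_word \<pi> w)) \<subseteq> set (take s w)"
  proof
    fix x assume "x \<in> set (take s (perm_word \<pi> w))"
    then obtain i where i: "i < s" "x = w ! \<pi> i" using perm_word_take[of s w \<pi>] s l by auto
    have "\<pi> i < s" using hpi i by blast
    then have "\<pi> i < length (take s w)" "take s w ! \<pi> i = w ! \<pi> i" using s l by auto
    then show "x \<in> set (take s w)" using i nth_mem by metis
  qed
  have "card (set (take s w)) = s" using d l s by (simp add: distinct_card)
  then show ?thesis using card_subset_eq[OF _ sub] colperm_take(2)[OF pi d l s] by simp
qed

lemma list_eq_by_prefix_sets: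
  assumes "length xs = n" "length ys = n" "distinct xs" "distinct ys"
    and "\<forall>s\<le>n. set (take s xs) = set (take s ys)"
  shows "xs = ys"
proof (rule nth_equalityI)
  show "length xs = length ys" using assms by simp
  fix i assume i: "i < length xs"
  have a: "set (take (Suc i) xs) = insert (xs ! i) (set (take i xs))"
    using i by (simp add: take_Suc_conv_app_nth)
  have b: "set (take (Suc i) ys) = insert (ys ! i) (set (take i ys))"
    using i assms by (simp add: take_Suc_conv_app_nth)
  have nd: "zs ! i \<notin> set (take i zs)" if "distinct zs" "i < length zs" for zs :: "'a list"
  proof
    assume "zs ! i \<in> set (take i zs)"
    then obtain j where "j < length (take i zs)" "take i zs ! j = zs ! i" by (auto simp: in_set_conv_nth)
    then have "j < i" "zs ! j = zs ! i" by auto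
    moreover have "j < length zs" using \<open>j < i\<close> that by simp
    ultimately show False using nth_eq_iff_index_eq[OF that(1)] that by fastforce
  qed
  have nx: "xs ! i \<notin> set (take i xs)" using nd i assms(3) by blast
  have ny: "ys ! i \<notin> set (take i ys)" using nd i assms by simp
  have "set (take (Suc i) xs) = set (take (Suc i) ys)" "set (take i xs) = set (take i ys)"
    using assms i by auto
  then show "xs ! i = ys ! i" using a b nx ny by blast
qed

theorem proposition5p35:
  fixes ord :: "'a::{finite,complete_lattice} \<Rightarrow> nat"
    and ss :: "nat list" and n :: nat and w :: "'a list"
  assumes "geometric_lattice TYPE('a)"
    and "atom_ordering ord"
    and "n = rk (top::'a)"
    and "sorted_wrt (<) ss" and "set ss \<subseteq> {1..n-1}"
    and "standard_ribbon_filling ord ss n w"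
    and "NBC_plus_basis ord w"
  shows "(\<forall>\<pi>\<in>col_perms ss n. maximal_chain_PS ss (f_chain ss (perm_word \<pi> w)))
       \<and> inj_on (\<lambda>\<pi>. f_chain ss (perm_word \<pi> w)) (col_perms ss n)"
proof -
  note geo = assms(1)
  have d: "distinct w" and l: "length w = n" and ind: "NBC_independent ord (set w)"
    using assms(3,7) unfolding NBC_plus_basis_def by auto
  have at: "\<forall>a\<in>set w. is_atom a" and rB: "rk (Sup (set w)) = card (set w)"
    using ind unfolding NBC_independent_def by auto
  have ssn: "s \<le> n" if "s \<in> set ss" for s
  proof -
    have "s \<in> {1..n-1}" using assms(5) that by blast
    then show ?thesis by auto
  qed
  have rk_take: "rk (Sup (set (take s (perm_word \<pi> w)))) = s"
    if "\<pi> \<in> col_perms ss n" "s \<le> n" for \<pi> s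
    using indep_rk[OF geo at rB colperm_take(1)[OF that(1) d l that(2)]] colperm_take(2)[OF that(1) d l that(2)]
    by simp
  have part1: "maximal_chain_PS ss (f_chain ss (perm_word \<pi> w))" if pi: "\<pi> \<in> col_perms ss n" for \<pi>
    unfolding maximal_chain_PS_def
  proof (intro conjI allI impI)
    show "length (f_chain ss (perm_word \<pi> w)) = length ss" by (simp add: f_chain_def)
  next
    fix i assume "i < length (f_chain ss (perm_word \<pi> w))"
    then have i: "i < length ss" by (simp add: f_chain_def)
    then have "ss ! i \<le> n" using ssn nth_mem by blast
    then show "rk (f_chain ss (perm_word \<pi> w) ! i) = ss ! i"
      using rk_take[OF pi] i by (simp add: f_chain_def)
  next
    show "sorted_wrt (<) (f_chain ss (perm_word \<pi> w))"
    proof (subst sorted_wrt_iff_nth_less, intro allI impI)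
      fix i j assume ij: "i < j" "j < length (f_chain ss (perm_word \<pi> w))"
      then have j: "j < length ss" and i: "i < length ss" by (auto simp: f_chain_def)
      have lt: "ss ! i < ss ! j" using assms(4) ij j by (simp add: sorted_wrt_iff_nth_less)
      have "ss ! i \<le> n" "ss ! j \<le> n" using ssn nth_mem i j by blast+
      then have r: "rk (Sup (set (take (ss ! i) (perm_word \<pi> w)))) = ss ! i"
                 "rk (Sup (set (take (ss ! j) (perm_word \<pi> w)))) = ss ! j"
        using rk_take[OF pi] by auto
      have "Sup (set (take (ss ! i) (perm_word \<pi> w))) \<le> Sup (set (take (ss ! j) (perm_word \<pi> w)))"
        using lt by (intro Sup_subset_mono set_take_subset_set_take) simp
      moreover have "Sup (set (take (ss ! i) (perm_word \<pi> w))) \<noteq> Sup (set (take (ss ! j) (perm_word \<pi> w)))"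
        using r lt by auto
      ultimately show "f_chain ss (perm_word \<pi> w) ! i < f_chain ss (perm_word \<pi> w) ! j"
        using i j by (simp add: f_chain_def)
    qed
  qed
  have part2: "inj_on (\<lambda>\<pi>. f_chain ss (perm_word \<pi> w)) (col_perms ss n)"
  proof
    fix \<pi> \<sigma> assume pi: "\<pi> \<in> col_perms ss n" and si: "\<sigma> \<in> col_perms ss n"
      and eq: "f_chain ss (perm_word \<pi> w) = f_chain ss (perm_word \<sigma> w)"
    have sets: "set (take s (perm_word \<pi> w)) = set (take s (perm_word \<sigma> w))" if s: "s \<le> n" for s
    proof (cases "s \<in> set ss")
      case True
      then obtain k where k: "k < length ss" "ss ! k = s" by (auto simp: in_set_conv_nth)
      have "f_chain ss (perm_word \<pi> w) ! k = f_chain ss (perm_word \<sigma> w) ! k" using eq by simp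
      then have "Sup (set (take s (perm_word \<pi> w))) = Sup (set (take s (perm_word \<sigma> w)))"
        using k by (simp add: f_chain_def)
      then show ?thesis
        using indep_inj[OF geo at rB colperm_take(1)[OF pi d l s] colperm_take(1)[OF si d l s]] by simp
    next
      case False
      then show ?thesis using colperm_take_fixed[OF pi d l s False] colperm_take_fixed[OF si d l s False] by simp
    qed
    have lw: "length (perm_word \<pi> w) = n" "length (perm_word \<sigma> w) = n"
      using l by (auto simp: perm_word_def)
    have dw: "distinct (perm_word \<pi> w)" "distinct (perm_word \<sigma> w)"
      using colperm_take(2)[OF pi d l order_refl] colperm_take(2)[OF si d l order_refl] lw
      by (auto simp: card_distinct)
    have weq: "perm_word \<pi> w = perm_word \<sigma> w"
      using list_eq_by_prefix_sets[OF lw dw] sets by blast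
    have permp: "\<pi> permutes {..<n}" and perms: "\<sigma> permutes {..<n}"
      using pi si by (auto simp: col_perms_def)
    show "\<pi> = \<sigma>"
    proof
      fix i show "\<pi> i = \<sigma> i"
      proof (cases "i < n")
        case True
        have "perm_word \<pi> w ! i = perm_word \<sigma> w ! i" using weq by simp
        then have "w ! \<pi> i = w ! \<sigma> i" using True l by (simp add: perm_word_def)
        moreover have "\<pi> i < length w" "\<sigma> i < length w"
          using permutes_in_image[OF permp, of i] permutes_in_image[OF perms, of i] True l by auto
        ultimately show ?thesis using nth_eq_iff_index_eq[OF d] by blast
      next
        case False
        then show ?thesis using permutes_not_in[OF permp, of i] permutes_not_in[OF perms, of i] by simp
      qed
    qed
  qed
  show ?thesis using part1 part2 by blast
qed

end
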